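(* Let $t\ge 1$ and $n\ge 1$ be integers and let $\mathcal{C}\subseteq\{0,1\}^n$ be a $t$-break-resilient code. For $i\in\{0,1,\ldots,n\}$ let $\mathcal{C}_i$ be the set of codewords of $\mathcal{C}$ of Hamming weight $i$, so that $\mathcal{C}=\mathcal{C}_0\cup\mathcal{C}_1\cup\cdots\cup\mathcal{C}_n$. Then for every $i\in\{1,\ldots,n\}$, the minimum Hamming distance of $\mathcal{C}_i$ is at least $\lceil\frac{t+1}{2}\rceil$ (i.e., any two distinct words of $\mathcal{C}_i$ differ in at least $\lceil\frac{t+1}{2}\rceil$ coordinates).
   Context: Breaking a binary string $\mathbf{x}\in\{0,1\}^n$ at $s\le t$ positions means choosing $s$ cut points between consecutive entries, producing $s+1$ (nonempty) consecutive substrings called fragments; the fragments are oriented (each is read left to right as in $\mathbf{x}$) but are given as an unordered multiset. Two words $\mathbf{x},\mathbf{y}\in\{0,1\}^n$ are $t$-confusable if there exist at most $t$ break positions in $\mathbf{x}$ and at most $t$ break positions in $\mathbf{y}$ that produce the same multiset of fragments. A code $\mathcal{C}\subseteq\{0,1\}^n$ is a $t$-break-resilient code ($t$-BRC) if no two distinct codewords of $\mathcal{C}$ are $t$-confusable, i.e., every codeword can be uniquely recovered from the unordered multiset of at most $t+1$ fragments resulting from any at most $t$ breaks. *)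

theory Defs
  imports Main "HOL-Library.Multiset"
begin

text \<open>Binary words of length n are modelled as boolean lists of length n
  (True = 1, False = 0).\<close>

definition words :: "nat \<Rightarrow> bool list set" where
  "words n = {x. length x = n}"

text \<open>A breaking of x at at most t positions: a list of nonempty consecutive
  fragments whose concatenation (in order) is x, with at most t+1 fragments
  (i.e. at most t cut points). The result is the unordered multiset of fragments.\<close>

definition breaking :: "nat \<Rightarrow> bool list \<Rightarrow> bool list list \<Rightarrow> bool" where
  "breaking t x fs \<longleftrightarrow> concat fs = x \<and> (\<forall>f\<in>set fs. f \<noteq> []) \<and> length fs \<le> t + 1"

definition confusable :: "nat \<Rightarrow> bool list \<Rightarrow> bool list \<Rightarrow> bool" where
  "confusable t x y \<longleftrightarrow>
     (\<exists>fs gs. breaking t x fs \<and> breaking t y gs \<and> mset fs = mset gs)"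

definition break_resilient :: "nat \<Rightarrow> nat \<Rightarrow> bool list set \<Rightarrow> bool" where
  "break_resilient n t C \<longleftrightarrow> C \<subseteq> words n \<and>
     (\<forall>x\<in>C. \<forall>y\<in>C. x \<noteq> y \<longrightarrow> \<not> confusable t x y)"

definition hamming_weight :: "bool list \<Rightarrow> nat" where
  "hamming_weight x = length (filter id x)"

definition hamming_dist :: "bool list \<Rightarrow> bool list \<Rightarrow> nat" where
  "hamming_dist x y = card {i. i < length x \<and> x ! i \<noteq> y ! i}"

definition weight_class :: "bool list set \<Rightarrow> nat \<Rightarrow> bool list set" where
  "weight_class C i = {x\<in>C. hamming_weight x = i}"

end

theory Submission
  imports Defs
begin

fun pieces :: "bool list \<Rightarrow> bool list \<Rightarrow> (bool list \<times> bool list) list" where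
  "pieces (a#as) (b#bs) = (if a \<noteq> b then ([a],[b]) # pieces as bs else
     (case pieces as bs of
        [] \<Rightarrow> [([a],[b])]
      | (c,c') # r \<Rightarrow> (if c = c' then (a#c, b#c') # r else ([a],[b]) # (c,c') # r)))"
| "pieces _ _ = []"

fun dcount :: "bool list \<Rightarrow> bool list \<Rightarrow> nat" where
  "dcount (a#as) (b#bs) = (if a \<noteq> b then 1 else 0) + dcount as bs"
| "dcount _ _ = 0"

definition good :: "bool list \<times> bool list \<Rightarrow> bool" where
  "good q \<longleftrightarrow> (fst q = snd q \<and> fst q \<noteq> []) \<or> q = ([True],[False]) \<or> q = ([False],[True])"

lemma pieces_props:
  "length xs = length ys \<Longrightarrow>
   concat (map fst (pieces xs ys)) = xs \<and> concat (map snd (pieces xs ys)) = ys \<and>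
   (\<forall>q\<in>set (pieces xs ys). good q) \<and>
   length (pieces xs ys) \<le> 2 * dcount xs ys + 1 \<and>
   (pieces xs ys \<noteq> [] \<and> fst (hd (pieces xs ys)) \<noteq> snd (hd (pieces xs ys)) \<longrightarrow>
      length (pieces xs ys) \<le> 2 * dcount xs ys)"
proof (induction xs ys rule: pieces.induct)
  case (1 a as b bs)
  then have IH: "concat (map fst (pieces as bs)) = as \<and> concat (map snd (pieces as bs)) = bs \<and>
   (\<forall>q\<in>set (pieces as bs). good q) \<and>
   length (pieces as bs) \<le> 2 * dcount as bs + 1 \<and>
   (pieces as bs \<noteq> [] \<and> fst (hd (pieces as bs)) \<noteq> snd (hd (pieces as bs)) \<longrightarrow>
      length (pieces as bs) \<le> 2 * dcount as bs)" by (cases "a = b") auto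
  show ?case
  proof (cases "a = b")
    case False
    then show ?thesis using IH by (cases a; cases b) (auto simp: good_def)
  next
    case True
    show ?thesis
    proof (cases "pieces as bs")
      case Nil
      then show ?thesis using IH True by (auto simp: good_def)
    next
      case (Cons q r)
      obtain c c' where q: "q = (c,c')" by force
      show ?thesis
      proof (cases "c = c'")
        case True
        then show ?thesis using IH \<open>a = b\<close> Cons q by (auto simp: good_def)
      next
        case False
        then show ?thesis using IH \<open>a = b\<close> Cons q by (auto simp: good_def)
      qed
    qed
  qed
qed auto

definition cTF :: "(bool list \<times> bool list) list \<Rightarrow> nat" where
  "cTF p = length (filter (\<lambda>q. q = ([True],[False])) p)"
definition cFT :: "(bool list \<times> bool list) list \<Rightarrow> nat" where
  "cFT p = length (filter (\<lambda>q. q = ([False],[True])) p)"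

lemma weight_concat: "hamming_weight (concat L) = sum_list (map hamming_weight L)"
  by (induction L) (auto simp: hamming_weight_def)

lemma weight_bal:
  "\<forall>q\<in>set p. good q \<Longrightarrow>
   sum_list (map (hamming_weight \<circ> fst) p) + cFT p = sum_list (map (hamming_weight \<circ> snd) p) + cTF p"
  by (induction p) (auto simp: good_def cTF_def cFT_def hamming_weight_def)

lemma mset_bal:
  "\<forall>q\<in>set p. good q \<Longrightarrow>
   mset (map fst p) + replicate_mset (cFT p) [True] + replicate_mset (cTF p) [False]
   = mset (map snd p) + replicate_mset (cTF p) [True] + replicate_mset (cFT p) [False]"
proof (induction p)
  case (Cons q p)
  then show ?case by (auto simp: good_def cTF_def cFT_def add_mset_commute)
qed (simp add: cTF_def cFT_def)

lemma dcount_eq: "length x = length y \<Longrightarrow> dcount x y = hamming_dist x y"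
proof -
  assume l: "length x = length y"
  have "dcount x y = length (filter (\<lambda>(a,b). a \<noteq> b) (zip x y))"
    using l by (induction x y rule: dcount.induct) auto
  also have "\<dots> = card {i. i < length (zip x y) \<and> (\<lambda>(a,b). a \<noteq> b) (zip x y ! i)}"
    by (rule length_filter_conv_card)
  also have "\<dots> = hamming_dist x y" unfolding hamming_dist_def using l by (intro arg_cong[where f=card]) auto
  finally show ?thesis .
qed

theorem lemma1:
  fixes n t :: nat and C :: "bool list set"
  assumes "t \<ge> 1" and "n \<ge> 1"
    and "break_resilient n t C"
  shows "\<forall>i\<in>{1..n}. \<forall>x\<in>weight_class C i. \<forall>y\<in>weight_class C i.
           x \<noteq> y \<longrightarrow> hamming_dist x y \<ge> (t + 2) div 2"
proof (intro ballI impI)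
  fix i x y assume x: "x \<in> weight_class C i" and y: "y \<in> weight_class C i" and ne: "x \<noteq> y"
  have xC: "x \<in> C" and yC: "y \<in> C" and wx: "hamming_weight x = i" and wy: "hamming_weight y = i"
    using x y by (auto simp: weight_class_def)
  have l: "length x = length y" using assms(3) xC yC by (auto simp: break_resilient_def words_def)
  show "hamming_dist x y \<ge> (t + 2) div 2"
  proof (rule ccontr)
    assume "\<not> ?thesis"
    then have d: "2 * dcount x y \<le> t" using dcount_eq[OF l] by linarith
    define p where "p = pieces x y"
    have P: "concat (map fst p) = x" "concat (map snd p) = y" "\<forall>q\<in>set p. good q"
      "length p \<le> t + 1"
      using pieces_props[OF l] d unfolding p_def by auto
    have "sum_list (map (hamming_weight \<circ> fst) p) = hamming_weight x"
      using P(1) weight_concat[of "map fst p"] by simp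
    moreover have "sum_list (map (hamming_weight \<circ> snd) p) = hamming_weight y"
      using P(2) weight_concat[of "map snd p"] by simp
    ultimately have "cFT p = cTF p" using weight_bal[OF P(3)] wx wy by simp
    then have M: "mset (map fst p) = mset (map snd p)" using mset_bal[OF P(3)] by simp
    have "breaking t x (map fst p)" "breaking t y (map snd p)"
      using P by (auto simp: breaking_def good_def)
    then have "confusable t x y" using M unfolding confusable_def by blast
    then show False using assms(3) xC yC ne by (auto simp: break_resilient_def)
  qed
qed

end
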